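(* Let $\mu>0$, $\lambda\in(0,1)$, $a_{b1},a_{b2}\in[-1,1]$ and $b>0$. Consider a single agent moving according to the closed-loop dynamics of Configuration I (see context), and call a state a circling equilibrium if $\rho_{1b1},\rho_{1b2}>0$, the agent is not collinear with the two beacons, and the time derivatives of the four shape variables $\bar x_{1b1},\bar x_{1b2},\rho_{1b1},\rho_{1b2}$ all vanish. Then a circling equilibrium exists if and only if one of the following holds, and at any circling equilibrium $\bar x_{1b1}=\bar x_{1b2}=0$ and the distances are as follows. (a) If $\lambda a_{b1}=(1-\lambda)a_{b2}<0$, then $$\rho_{1b1}=\rho_{1b2}=\frac{1}{-4\mu\lambda a_{b1}}\Bigl(1+\sqrt{1+(4\mu\lambda a_{b1}b)^2}\Bigr).$$ (b) If $\lambda a_{b1}\neq(1-\lambda)a_{b2}$ and $\lambda a_{b1}+(1-\lambda)a_{b2}<0$, then $\rho_{1b1}=(\rho_{1b+}-\rho_{1b-})/2$ and $\rho_{1b2}=(\rho_{1b+}+\rho_{1b-})/2$, where $$\rho_{1b+}=\frac{1+\sqrt{1+\bigl[2b\mu(\lambda a_{b1}+(1-\lambda)a_{b2})\bigr]^2}}{-\mu\bigl(\lambda a_{b1}+(1-\lambda)a_{b2}\bigr)},\qquad \rho_{1b-}=\frac{-1+\sqrt{1+\bigl[2b\mu(\lambda a_{b1}-(1-\lambda)a_{b2})\bigr]^2}}{-\mu\bigl(\lambda a_{b1}-(1-\lambda)a_{b2}\bigr)}.$$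
   Context: Configuration I: two fixed beacons at $\mathbf r_{b1}=(0,0,-b)$ and $\mathbf r_{b2}=(0,0,b)$ in $\mathbb R^3$, and one agent with position $\mathbf r_1\in\mathbb R^3$ and unit velocity $\mathbf x_1$. Write $\mathbf r_{1bi}=\mathbf r_1-\mathbf r_{bi}$, $\rho_{1bi}=|\mathbf r_{1bi}|$, $\bar x_{1bi}=\mathbf x_1\cdot \mathbf r_{1bi}/\rho_{1bi}$ ($i=1,2$). The agent moves with unit speed under the beacon-referenced constant-bearing control law, whose closed loop is $$\dot{\mathbf r}_1=\mathbf x_1,\qquad \dot{\mathbf x}_1=-(1-\lambda)\mu(\bar x_{1b2}-a_{b2})\Bigl(\tfrac{\mathbf r_{1b2}}{\rho_{1b2}}-\bar x_{1b2}\mathbf x_1\Bigr)-\lambda\mu(\bar x_{1b1}-a_{b1})\Bigl(\tfrac{\mathbf r_{1b1}}{\rho_{1b1}}-\bar x_{1b1}\mathbf x_1\Bigr).$$ Here $\mu>0$ is a gain, $\lambda$ an attention weight and $a_{b1},a_{b2}$ the constant-bearing parameters with respect to the two beacons. The time derivatives of $\bar x_{1b1},\bar x_{1b2},\rho_{1b1},\rho_{1b2}$ along this flow depend only on these four variables (using $\frac{\mathbf r_{1b1}}{\rho_{1b1}}\cdot\frac{\mathbf r_{1b2}}{\rho_{1b2}}=\frac{\rho_{1b1}^2+\rho_{1b2}^2-4b^2}{2\rho_{1b1}\rho_{1b2}}$). *)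

theory Defs
  imports "HOL-Analysis.Analysis"
begin

definition beacon1 :: "real \<Rightarrow> real^3" where
  "beacon1 b = vector [0, 0, -b]"

definition beacon2 :: "real \<Rightarrow> real^3" where
  "beacon2 b = vector [0, 0, b]"

definition rho1b1 :: "real \<Rightarrow> (real^3) \<times> (real^3) \<Rightarrow> real" where
  "rho1b1 b s = norm (fst s - beacon1 b)"

definition rho1b2 :: "real \<Rightarrow> (real^3) \<times> (real^3) \<Rightarrow> real" where
  "rho1b2 b s = norm (fst s - beacon2 b)"

definition xbar1b1 :: "real \<Rightarrow> (real^3) \<times> (real^3) \<Rightarrow> real" where
  "xbar1b1 b s = (snd s \<bullet> (fst s - beacon1 b)) / norm (fst s - beacon1 b)"

definition xbar1b2 :: "real \<Rightarrow> (real^3) \<times> (real^3) \<Rightarrow> real" where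
  "xbar1b2 b s = (snd s \<bullet> (fst s - beacon2 b)) / norm (fst s - beacon2 b)"

definition xdot :: "real \<Rightarrow> real \<Rightarrow> real \<Rightarrow> real \<Rightarrow> real \<Rightarrow> real^3 \<Rightarrow> real^3 \<Rightarrow> real^3" where
  "xdot mu lam ab1 ab2 b r x =
     - (((1 - lam) * mu * (xbar1b2 b (r, x) - ab2)) *\<^sub>R
          ((1 / norm (r - beacon2 b)) *\<^sub>R (r - beacon2 b) - xbar1b2 b (r, x) *\<^sub>R x))
     - ((lam * mu * (xbar1b1 b (r, x) - ab1)) *\<^sub>R
          ((1 / norm (r - beacon1 b)) *\<^sub>R (r - beacon1 b) - xbar1b1 b (r, x) *\<^sub>R x))"

text \<open>Time derivative of a state function f along the closed-loop flow
  (rdot = x, xdot as above) at the state (r, x) equals D: the derivative of f along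
  the vector field, i.e. d/dt f(r + t rdot, x + t xdot) at t = 0.\<close>

definition flow_deriv ::
  "real \<Rightarrow> real \<Rightarrow> real \<Rightarrow> real \<Rightarrow> real \<Rightarrow> ((real^3) \<times> (real^3) \<Rightarrow> real)
     \<Rightarrow> real^3 \<Rightarrow> real^3 \<Rightarrow> real \<Rightarrow> bool" where
  "flow_deriv mu lam ab1 ab2 b f r x D \<longleftrightarrow>
     ((\<lambda>t. f (r + t *\<^sub>R x, x + t *\<^sub>R xdot mu lam ab1 ab2 b r x)) has_real_derivative D) (at 0)"

definition circling_equilibrium ::
  "real \<Rightarrow> real \<Rightarrow> real \<Rightarrow> real \<Rightarrow> real \<Rightarrow> real^3 \<Rightarrow> real^3 \<Rightarrow> bool" where
  "circling_equilibrium mu lam ab1 ab2 b r x \<longleftrightarrow>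
     rho1b1 b (r, x) > 0 \<and> rho1b2 b (r, x) > 0 \<and>
     \<not> collinear {r, beacon1 b, beacon2 b} \<and>
     flow_deriv mu lam ab1 ab2 b (xbar1b1 b) r x 0 \<and>
     flow_deriv mu lam ab1 ab2 b (xbar1b2 b) r x 0 \<and>
     flow_deriv mu lam ab1 ab2 b (rho1b1 b) r x 0 \<and>
     flow_deriv mu lam ab1 ab2 b (rho1b2 b) r x 0"

end

theory Submission
  imports Defs
begin

lemma sq_line: "(w + t *\<^sub>R x) \<bullet> (w + t *\<^sub>R x) = w \<bullet> w + 2*t*(w \<bullet> x) + t^2*(x \<bullet> x)"
  for w x :: "'a::real_inner"
  by (simp add: inner_add_left inner_add_right inner_commute power2_eq_square algebra_simps)

lemma num_line: "(x + t *\<^sub>R v) \<bullet> (w + t *\<^sub>R x) = x \<bullet> w + t*(x \<bullet> x + v \<bullet> w) + t^2*(v \<bullet> x)"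
  for w x v :: "'a::real_inner"
  by (simp add: inner_add_left inner_add_right inner_commute power2_eq_square algebra_simps)

lemma d_norm:
  fixes w x :: "'a::real_inner"
  assumes "w \<noteq> 0"
  shows "((\<lambda>t. norm (w + t *\<^sub>R x)) has_real_derivative (w \<bullet> x / norm w)) (at 0)"
proof -
  have e: "(\<lambda>t. norm (w + t *\<^sub>R x)) = (\<lambda>t. sqrt (w \<bullet> w + 2*t*(w \<bullet> x) + t^2*(x \<bullet> x)))"
    by (rule ext) (simp add: norm_eq_sqrt_inner sq_line)
  have p: "w \<bullet> w > 0" using assms by simp
  have q: "((\<lambda>t. w \<bullet> w + 2*t*(w \<bullet> x) + t^2*(x \<bullet> x)) has_real_derivative 2*(w \<bullet> x)) (at 0)"
    by (rule derivative_eq_intros refl | simp)+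
  have "((\<lambda>t. sqrt (w \<bullet> w + 2*t*(w \<bullet> x) + t^2*(x \<bullet> x))) has_real_derivative
     (inverse (sqrt (w \<bullet> w)) / 2) * (2*(w \<bullet> x))) (at 0)"
    using DERIV_chain2[OF DERIV_real_sqrt q] p by simp
  then show ?thesis unfolding e by (simp add: norm_eq_sqrt_inner field_simps)
qed

lemma d_xbar:
  fixes w x v :: "'a::real_inner"
  assumes "w \<noteq> 0"
  shows "((\<lambda>t. ((x + t *\<^sub>R v) \<bullet> (w + t *\<^sub>R x)) / norm (w + t *\<^sub>R x)) has_real_derivative
     (((x \<bullet> x + v \<bullet> w) * norm w - (x \<bullet> w) * (w \<bullet> x / norm w)) / (norm w * norm w))) (at 0)"
proof -
  have e: "(\<lambda>t. (x + t *\<^sub>R v) \<bullet> (w + t *\<^sub>R x)) = (\<lambda>t. x \<bullet> w + t*(x \<bullet> x + v \<bullet> w) + t^2*(v \<bullet> x))"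
    by (rule ext) (simp add: num_line)
  have n: "((\<lambda>t. (x + t *\<^sub>R v) \<bullet> (w + t *\<^sub>R x)) has_real_derivative (x \<bullet> x + v \<bullet> w)) (at 0)"
    unfolding e by (rule derivative_eq_intros refl | simp)+
  show ?thesis using DERIV_divide[OF n d_norm[OF assms]] assms by simp
qed

lemma fd_rho1:
  assumes "r \<noteq> beacon1 b"
  shows "flow_deriv mu lam ab1 ab2 b (rho1b1 b) r x D \<longleftrightarrow> D = (r - beacon1 b) \<bullet> x / norm (r - beacon1 b)"
proof -
  have e: "(\<lambda>t. rho1b1 b (r + t *\<^sub>R x, x + t *\<^sub>R xdot mu lam ab1 ab2 b r x)) = (\<lambda>t. norm ((r - beacon1 b) + t *\<^sub>R x))"
    by (rule ext) (simp add: rho1b1_def algebra_simps)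
  have d: "((\<lambda>t. norm ((r - beacon1 b) + t *\<^sub>R x)) has_real_derivative (r - beacon1 b) \<bullet> x / norm (r - beacon1 b)) (at 0)"
    by (rule d_norm) (use assms in simp)
  show ?thesis unfolding flow_deriv_def e using d DERIV_unique by blast
qed

lemma fd_rho2:
  assumes "r \<noteq> beacon2 b"
  shows "flow_deriv mu lam ab1 ab2 b (rho1b2 b) r x D \<longleftrightarrow> D = (r - beacon2 b) \<bullet> x / norm (r - beacon2 b)"
proof -
  have e: "(\<lambda>t. rho1b2 b (r + t *\<^sub>R x, x + t *\<^sub>R xdot mu lam ab1 ab2 b r x)) = (\<lambda>t. norm ((r - beacon2 b) + t *\<^sub>R x))"
    by (rule ext) (simp add: rho1b2_def algebra_simps)
  have d: "((\<lambda>t. norm ((r - beacon2 b) + t *\<^sub>R x)) has_real_derivative (r - beacon2 b) \<bullet> x / norm (r - beacon2 b)) (at 0)"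
    by (rule d_norm) (use assms in simp)
  show ?thesis unfolding flow_deriv_def e using d DERIV_unique by blast
qed

lemma fd_xbar1:
  assumes "r \<noteq> beacon1 b"
  shows "flow_deriv mu lam ab1 ab2 b (xbar1b1 b) r x D \<longleftrightarrow> D =
    ((x \<bullet> x + xdot mu lam ab1 ab2 b r x \<bullet> (r - beacon1 b)) * norm (r - beacon1 b) - (x \<bullet> (r - beacon1 b)) * ((r - beacon1 b) \<bullet> x / norm (r - beacon1 b))) / (norm (r - beacon1 b) * norm (r - beacon1 b))"
proof -
  have e: "(\<lambda>t. xbar1b1 b (r + t *\<^sub>R x, x + t *\<^sub>R xdot mu lam ab1 ab2 b r x)) =
     (\<lambda>t. ((x + t *\<^sub>R xdot mu lam ab1 ab2 b r x) \<bullet> ((r - beacon1 b) + t *\<^sub>R x)) / norm ((r - beacon1 b) + t *\<^sub>R x))"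
  proof (rule ext)
    fix t :: real
    have "r + t *\<^sub>R x - beacon1 b = (r - beacon1 b) + t *\<^sub>R x" by simp
    then show "xbar1b1 b (r + t *\<^sub>R x, x + t *\<^sub>R xdot mu lam ab1 ab2 b r x) =
      ((x + t *\<^sub>R xdot mu lam ab1 ab2 b r x) \<bullet> ((r - beacon1 b) + t *\<^sub>R x)) / norm ((r - beacon1 b) + t *\<^sub>R x)"
      by (simp only: xbar1b1_def fst_conv snd_conv)
  qed
  have d: "((\<lambda>t. ((x + t *\<^sub>R xdot mu lam ab1 ab2 b r x) \<bullet> ((r - beacon1 b) + t *\<^sub>R x)) / norm ((r - beacon1 b) + t *\<^sub>R x)) has_real_derivative
    ((x \<bullet> x + xdot mu lam ab1 ab2 b r x \<bullet> (r - beacon1 b)) * norm (r - beacon1 b) - (x \<bullet> (r - beacon1 b)) * ((r - beacon1 b) \<bullet> x / norm (r - beacon1 b))) / (norm (r - beacon1 b) * norm (r - beacon1 b))) (at 0)"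
    by (rule d_xbar) (use assms in simp)
  show ?thesis unfolding flow_deriv_def e using d DERIV_unique by blast
qed

lemma fd_xbar2:
  assumes "r \<noteq> beacon2 b"
  shows "flow_deriv mu lam ab1 ab2 b (xbar1b2 b) r x D \<longleftrightarrow> D =
    ((x \<bullet> x + xdot mu lam ab1 ab2 b r x \<bullet> (r - beacon2 b)) * norm (r - beacon2 b) - (x \<bullet> (r - beacon2 b)) * ((r - beacon2 b) \<bullet> x / norm (r - beacon2 b))) / (norm (r - beacon2 b) * norm (r - beacon2 b))"
proof -
  have e: "(\<lambda>t. xbar1b2 b (r + t *\<^sub>R x, x + t *\<^sub>R xdot mu lam ab1 ab2 b r x)) =
     (\<lambda>t. ((x + t *\<^sub>R xdot mu lam ab1 ab2 b r x) \<bullet> ((r - beacon2 b) + t *\<^sub>R x)) / norm ((r - beacon2 b) + t *\<^sub>R x))"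
  proof (rule ext)
    fix t :: real
    have "r + t *\<^sub>R x - beacon2 b = (r - beacon2 b) + t *\<^sub>R x" by simp
    then show "xbar1b2 b (r + t *\<^sub>R x, x + t *\<^sub>R xdot mu lam ab1 ab2 b r x) =
      ((x + t *\<^sub>R xdot mu lam ab1 ab2 b r x) \<bullet> ((r - beacon2 b) + t *\<^sub>R x)) / norm ((r - beacon2 b) + t *\<^sub>R x)"
      by (simp only: xbar1b2_def fst_conv snd_conv)
  qed
  have d: "((\<lambda>t. ((x + t *\<^sub>R xdot mu lam ab1 ab2 b r x) \<bullet> ((r - beacon2 b) + t *\<^sub>R x)) / norm ((r - beacon2 b) + t *\<^sub>R x)) has_real_derivative
    ((x \<bullet> x + xdot mu lam ab1 ab2 b r x \<bullet> (r - beacon2 b)) * norm (r - beacon2 b) - (x \<bullet> (r - beacon2 b)) * ((r - beacon2 b) \<bullet> x / norm (r - beacon2 b))) / (norm (r - beacon2 b) * norm (r - beacon2 b))) (at 0)"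
    by (rule d_xbar) (use assms in simp)
  show ?thesis unfolding flow_deriv_def e using d DERIV_unique by blast
qed


lemma char:
  assumes "norm x = 1" "r \<noteq> beacon1 b" "r \<noteq> beacon2 b"
  defines "w1 \<equiv> r - beacon1 b" and "w2 \<equiv> r - beacon2 b"
  shows "(flow_deriv mu lam ab1 ab2 b (xbar1b1 b) r x 0 \<and> flow_deriv mu lam ab1 ab2 b (xbar1b2 b) r x 0 \<and>
          flow_deriv mu lam ab1 ab2 b (rho1b1 b) r x 0 \<and> flow_deriv mu lam ab1 ab2 b (rho1b2 b) r x 0) \<longleftrightarrow>
    (x \<bullet> w1 = 0 \<and> x \<bullet> w2 = 0 \<and>
     mu * ((1 - lam) * ab2 * (w1 \<bullet> w2) / norm w2 + lam * ab1 * norm w1) = -1 \<and>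
     mu * ((1 - lam) * ab2 * norm w2 + lam * ab1 * (w1 \<bullet> w2) / norm w1) = -1)"
proof -
  have n1: "norm w1 > 0" and n2: "norm w2 > 0" using assms by auto
  have xx: "x \<bullet> x = 1" using assms(1) by (simp add: dot_square_norm)
  have ww1: "w1 \<bullet> w1 = norm w1 * norm w1" and ww2: "w2 \<bullet> w2 = norm w2 * norm w2"
    by (simp_all add: dot_square_norm power2_eq_square[symmetric])
  have v: "xdot mu lam ab1 ab2 b r x = ((1 - lam) * mu * ab2 / norm w2) *\<^sub>R w2 + (lam * mu * ab1 / norm w1) *\<^sub>R w1"
    if "x \<bullet> w1 = 0" "x \<bullet> w2 = 0"
  proof -
    have "xbar1b1 b (r,x) = 0" "xbar1b2 b (r,x) = 0"
      using that by (simp_all add: xbar1b1_def xbar1b2_def w1_def w2_def)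
    then show ?thesis unfolding xdot_def w1_def[symmetric] w2_def[symmetric]
      by (simp add: scaleR_scaleR)
  qed
  have vw1: "xdot mu lam ab1 ab2 b r x \<bullet> w1 = mu * ((1 - lam) * ab2 * (w1 \<bullet> w2) / norm w2 + lam * ab1 * norm w1)"
    if "x \<bullet> w1 = 0" "x \<bullet> w2 = 0"
    using n1 n2 unfolding v[OF that] by (simp add: inner_add_left ww1 inner_commute[of w2 w1] field_simps)
  have vw2: "xdot mu lam ab1 ab2 b r x \<bullet> w2 = mu * ((1 - lam) * ab2 * norm w2 + lam * ab1 * (w1 \<bullet> w2) / norm w1)"
    if "x \<bullet> w1 = 0" "x \<bullet> w2 = 0"
    using n1 n2 unfolding v[OF that] by (simp add: inner_add_left ww2 field_simps)
  show ?thesis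
    unfolding fd_rho1[OF assms(2)] fd_rho2[OF assms(3)] fd_xbar1[OF assms(2)] fd_xbar2[OF assms(3)]
    unfolding w1_def[symmetric] w2_def[symmetric]
  proof (intro iffI)
    assume h: "0 = ((x \<bullet> x + xdot mu lam ab1 ab2 b r x \<bullet> w1) * norm w1 - x \<bullet> w1 * (w1 \<bullet> x / norm w1)) / (norm w1 * norm w1) \<and>
        0 = ((x \<bullet> x + xdot mu lam ab1 ab2 b r x \<bullet> w2) * norm w2 - x \<bullet> w2 * (w2 \<bullet> x / norm w2)) / (norm w2 * norm w2) \<and>
        0 = w1 \<bullet> x / norm w1 \<and> 0 = w2 \<bullet> x / norm w2"
    then have a: "x \<bullet> w1 = 0" "x \<bullet> w2 = 0" using n1 n2 by (auto simp: inner_commute)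
    have "0 = (1 + xdot mu lam ab1 ab2 b r x \<bullet> w1) / norm w1"
      using h a n1 xx by simp
    then have e1: "xdot mu lam ab1 ab2 b r x \<bullet> w1 = -1" using n1 by (simp add: field_simps)
    have "0 = (1 + xdot mu lam ab1 ab2 b r x \<bullet> w2) / norm w2"
      using h a n2 xx by simp
    then have e2: "xdot mu lam ab1 ab2 b r x \<bullet> w2 = -1" using n2 by (simp add: field_simps)
    show "x \<bullet> w1 = 0 \<and> x \<bullet> w2 = 0 \<and>
     mu * ((1 - lam) * ab2 * (w1 \<bullet> w2) / norm w2 + lam * ab1 * norm w1) = -1 \<and>
     mu * ((1 - lam) * ab2 * norm w2 + lam * ab1 * (w1 \<bullet> w2) / norm w1) = -1"
      using a e1 e2 vw1[OF a] vw2[OF a] by simp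
  next
    assume h: "x \<bullet> w1 = 0 \<and> x \<bullet> w2 = 0 \<and>
     mu * ((1 - lam) * ab2 * (w1 \<bullet> w2) / norm w2 + lam * ab1 * norm w1) = -1 \<and>
     mu * ((1 - lam) * ab2 * norm w2 + lam * ab1 * (w1 \<bullet> w2) / norm w1) = -1"
    then have a: "x \<bullet> w1 = 0" "x \<bullet> w2 = 0" by auto
    show "0 = ((x \<bullet> x + xdot mu lam ab1 ab2 b r x \<bullet> w1) * norm w1 - x \<bullet> w1 * (w1 \<bullet> x / norm w1)) / (norm w1 * norm w1) \<and>
        0 = ((x \<bullet> x + xdot mu lam ab1 ab2 b r x \<bullet> w2) * norm w2 - x \<bullet> w2 * (w2 \<bullet> x / norm w2)) / (norm w2 * norm w2) \<and>
        0 = w1 \<bullet> x / norm w1 \<and> 0 = w2 \<bullet> x / norm w2"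
      using h a vw1[OF a] vw2[OF a] xx by (simp add: inner_commute)
  qed
qed


lemma inner3: "(x::real^3) \<bullet> y = x$1*y$1 + x$2*y$2 + x$3*y$3"
  by (simp add: inner_vec_def sum_3)

lemma bdist: "b > 0 \<Longrightarrow> norm (beacon2 b - beacon1 b) = 2*b"
  unfolding norm_eq_sqrt_inner inner3 beacon1_def beacon2_def
  by (simp add: real_sqrt_mult)

lemma construct:
  fixes b p1 p2 :: real
  assumes "b > 0" "p1 > 0" "p2 > 0" "2*b < p1 + p2" "\<bar>p1 - p2\<bar> < 2*b"
  shows "\<exists>r x. norm x = 1 \<and> norm (r - beacon1 b) = p1 \<and> norm (r - beacon2 b) = p2 \<and>
     x \<bullet> (r - beacon1 b) = 0 \<and> x \<bullet> (r - beacon2 b) = 0 \<and> \<not> collinear {r, beacon1 b, beacon2 b}"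
proof -
  define z where "z = (p1^2 - p2^2) / (4*b)"
  have key: "16*b^2*(p1^2 - (z+b)^2) = (p2 - p1 + 2*b)*(p2 + p1 - 2*b)*(p1 + 2*b - p2)*(p1 + 2*b + p2)"
    unfolding z_def using assms(1) by (simp add: power2_eq_square field_simps)
  have "(p2 - p1 + 2*b)*(p2 + p1 - 2*b)*(p1 + 2*b - p2)*(p1 + 2*b + p2) > 0"
    using assms by (intro mult_pos_pos) auto
  then have "16*b^2*(p1^2 - (z+b)^2) > 0" using key by simp
  moreover have "16*b^2 > 0" using assms(1) by simp
  ultimately have pp: "p1^2 - (z+b)^2 > 0" using zero_less_mult_pos by blast
  define p where "p = sqrt (p1^2 - (z+b)^2)"
  have p0: "p > 0" unfolding p_def using pp by simp
  have p2: "p^2 = p1^2 - (z+b)^2" unfolding p_def using pp by simp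
  define r :: "real^3" where "r = vector [p, 0, z]"
  define x :: "real^3" where "x = vector [0, 1, 0]"
  have "norm x = 1" unfolding norm_eq_sqrt_inner inner3 x_def by simp
  moreover have "norm (r - beacon1 b) = p1"
  proof -
    have "norm (r - beacon1 b) = sqrt (p^2 + (z+b)^2)"
      unfolding norm_eq_sqrt_inner inner3 r_def beacon1_def by (simp add: power2_eq_square)
    then show ?thesis using p2 assms by simp
  qed
  moreover have "norm (r - beacon2 b) = p2"
  proof -
    have "norm (r - beacon2 b) = sqrt (p^2 + (z-b)^2)"
      unfolding norm_eq_sqrt_inner inner3 r_def beacon2_def by (simp add: power2_eq_square)
    also have "p^2 + (z-b)^2 = p2^2" unfolding p2 z_def using assms(1) by (simp add: power2_eq_square field_simps)
    finally show ?thesis using assms by simp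
  qed
  moreover have "x \<bullet> (r - beacon1 b) = 0" "x \<bullet> (r - beacon2 b) = 0"
    unfolding inner3 x_def r_def beacon1_def beacon2_def by simp_all
  moreover have "\<not> collinear {r, beacon1 b, beacon2 b}"
  proof
    assume "collinear {r, beacon1 b, beacon2 b}"
    then have "collinear {beacon2 b, beacon1 b, r}" by (simp add: insert_commute)
    then have "collinear {0, beacon2 b - beacon1 b, r - beacon1 b}"
      by (subst (asm) collinear_3) simp_all
    then have "collinear {0, r - beacon1 b, beacon2 b - beacon1 b}" by (simp add: insert_commute)
    moreover have "r - beacon1 b \<noteq> 0" using p0 unfolding r_def beacon1_def
      by (metis vector_3(1) vector_minus_component zero_index cancel_comm_monoid_add_class.diff_cancel less_irrefl diff_zero)
    moreover have "beacon2 b - beacon1 b \<noteq> 0" using bdist[OF assms(1)] assms(1) by auto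
    moreover have "\<not> (\<exists>c. beacon2 b - beacon1 b = c *\<^sub>R (r - beacon1 b))"
    proof
      assume "\<exists>c. beacon2 b - beacon1 b = c *\<^sub>R (r - beacon1 b)"
      then obtain c where c: "beacon2 b - beacon1 b = c *\<^sub>R (r - beacon1 b)" by blast
      have "(beacon2 b - beacon1 b)$1 = c * p" using arg_cong[OF c, of "\<lambda>v. v$1"] unfolding r_def beacon1_def by simp
      then have "c = 0" using p0 unfolding beacon1_def beacon2_def by simp
      then show False using c \<open>beacon2 b - beacon1 b \<noteq> 0\<close> by simp
    qed
    ultimately show False using collinear_lemma by blast
  qed
  ultimately show ?thesis by blast
qed

lemma root_plus:
  fixes mu b S P :: real
  assumes "mu > 0" "b > 0" "P > 0" "2*b \<le> P" "mu*S*(P^2 - 4*b^2) = -2*P"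
  shows "S < 0 \<and> P = (1 + sqrt (1 + (2*b*mu*S)^2)) / (- mu * S)"
proof -
  have "(2*b)^2 \<le> P^2" by (rule power_mono) (use assms in auto)
  then have g: "P^2 - 4*b^2 \<ge> 0" by (simp add: power_mult_distrib)
  have ne: "P^2 - 4*b^2 \<noteq> 0" using assms by auto
  have g2: "P^2 - 4*b^2 > 0" using g ne by linarith
  have "mu*S < 0"
  proof (rule ccontr)
    assume "\<not> mu*S < 0"
    then have "mu*S*(P^2 - 4*b^2) \<ge> 0" using g by simp
    then show False using assms by linarith
  qed
  then have S: "S < 0" using assms(1) by (simp add: mult_less_0_iff)
  have "mu*S*P*(P^2 - 4*b^2) = P*(mu*S*(P^2 - 4*b^2))" by (simp add: algebra_simps)
  also have "\<dots> = -2*P^2" unfolding assms(5) by (simp add: power2_eq_square)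
  finally have k: "mu*S*P*(P^2 - 4*b^2) = -2*P^2" .
  have lt: "mu*S*P + 1 < 0"
  proof (rule ccontr)
    assume "\<not> mu*S*P + 1 < 0"
    then have "mu*S*P \<ge> -1" by linarith
    then have "mu*S*P*(P^2 - 4*b^2) \<ge> -1 * (P^2 - 4*b^2)" using g2 by (intro mult_right_mono) auto
    then have h: "mu*S*P*(P^2 - 4*b^2) \<ge> 4*b^2 - P^2" by simp
    have "P^2 > 0" "b^2 \<ge> 0" using assms by auto
    then show False using k h by linarith
  qed
  have sq: "(mu*S*P + 1)^2 = 1 + (2*b*mu*S)^2"
  proof -
    have "(mu*S*P + 1)^2 = mu*S*(mu*S*(P^2 - 4*b^2)) + 2*mu*S*P + 1 + 4*b^2*mu^2*S^2"
      by (simp add: power2_eq_square algebra_simps)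
    also have "\<dots> = 1 + (2*b*mu*S)^2" unfolding assms(5) by (simp add: power2_eq_square algebra_simps)
    finally show ?thesis .
  qed
  have "sqrt (1 + (2*b*mu*S)^2) = - (mu*S*P + 1)" using sq lt by (metis real_sqrt_abs abs_of_neg)
  then show ?thesis using S assms(1) by (simp add: field_simps)
qed

lemma root_minus:
  fixes mu b D M :: real
  assumes "mu > 0" "b > 0" "\<bar>M\<bar> \<le> 2*b" "D \<noteq> 0" "mu*D*(4*b^2 - M^2) = -2*M"
  shows "M = (-1 + sqrt (1 + (2*b*mu*D)^2)) / (- mu * D)"
proof -
  have "\<bar>M\<bar>^2 \<le> (2*b)^2" by (rule power_mono) (use assms in auto)
  then have g: "4*b^2 - M^2 \<ge> 0" by (simp add: power_mult_distrib)
  have M0: "M \<noteq> 0" using assms by auto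
  have ne: "4*b^2 - M^2 \<noteq> 0" using assms M0 by auto
  have g2: "4*b^2 - M^2 > 0" using g ne by linarith
  have "mu*D*M*(4*b^2 - M^2) = M*(mu*D*(4*b^2 - M^2))" by (simp add: algebra_simps)
  also have "\<dots> = -2*M^2" unfolding assms(5) by (simp add: power2_eq_square)
  finally have k: "mu*D*M*(4*b^2 - M^2) = -2*M^2" .
  have lt: "mu*D*M - 1 < 0"
  proof (rule ccontr)
    assume "\<not> mu*D*M - 1 < 0"
    then have "mu*D*M \<ge> 1" by linarith
    then have "mu*D*M*(4*b^2 - M^2) \<ge> 1 * (4*b^2 - M^2)" using g2 by (intro mult_right_mono) auto
    then have h: "mu*D*M*(4*b^2 - M^2) \<ge> 4*b^2 - M^2" by simp
    have "M^2 \<ge> 0" by simp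
    then show False using k g2 h by linarith
  qed
  have sq: "(mu*D*M - 1)^2 = 1 + (2*b*mu*D)^2"
  proof -
    have "(mu*D*M - 1)^2 = - mu*D*(mu*D*(4*b^2 - M^2)) - 2*mu*D*M + 1 + 4*b^2*mu^2*D^2"
      by (simp add: power2_eq_square algebra_simps)
    also have "\<dots> = 1 + (2*b*mu*D)^2" unfolding assms(5) by (simp add: power2_eq_square algebra_simps)
    finally show ?thesis .
  qed
  have "sqrt (1 + (2*b*mu*D)^2) = - (mu*D*M - 1)" using sq lt by (metis real_sqrt_abs abs_of_neg)
  then show ?thesis using assms(1,4) by (simp add: field_simps)
qed


lemma id_sum:
  fixes mu A B p1 p2 b c :: real
  assumes "c = (p1^2 + p2^2 - 4*b^2)/2"
  shows "mu*(B*c + A*p1*p2) + mu*(B*p1*p2 + A*c) = mu*(A+B)*((p1+p2)^2 - 4*b^2)/2"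
    and "mu*(B*c + A*p1*p2) - mu*(B*p1*p2 + A*c) = mu*(A-B)*(4*b^2 - (p2-p1)^2)/2"
  unfolding assms by (simp_all add: power2_eq_square field_simps)

lemma alg_fwd:
  fixes mu b A B p1 p2 c :: real
  assumes "mu > 0" "b > 0" "p1 > 0" "p2 > 0" "2*b \<le> p1 + p2" "\<bar>p1 - p2\<bar> \<le> 2*b"
    and c: "c = (p1^2 + p2^2 - 4*b^2)/2"
    and E1: "mu*(B*c/p2 + A*p1) = -1" and E2: "mu*(B*p2 + A*c/p1) = -1"
  shows "A + B < 0 \<and> p1 + p2 = (1 + sqrt (1 + (2*b*mu*(A+B))^2)) / (- mu * (A+B)) \<and>
    (A = B \<longrightarrow> p1 = p2) \<and>
    (A \<noteq> B \<longrightarrow> p2 - p1 = (-1 + sqrt (1 + (2*b*mu*(A-B))^2)) / (- mu * (A-B)))"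
proof -
  have "mu*(B*c + A*p1*p2) = mu*(B*c/p2 + A*p1)*p2" using assms(4) by (simp add: field_simps)
  then have E1': "mu*(B*c + A*p1*p2) = -p2" using E1 by simp
  have "mu*(B*p1*p2 + A*c) = mu*(B*p2 + A*c/p1)*p1" using assms(3) by (simp add: field_simps)
  then have E2': "mu*(B*p1*p2 + A*c) = -p1" using E2 by simp
  have sum: "mu*(A+B)*((p1+p2)^2 - 4*b^2) = -2*(p1+p2)"
    using id_sum(1)[OF c, of mu B A] E1' E2' by simp
  have dif: "mu*(A-B)*(4*b^2 - (p2-p1)^2) = -2*(p2-p1)"
    using id_sum(2)[OF c, of mu B A] E1' E2' by simp
  have rp: "A + B < 0 \<and> p1 + p2 = (1 + sqrt (1 + (2*b*mu*(A+B))^2)) / (- mu * (A+B))"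
    using root_plus[OF assms(1,2) _ assms(5) sum] assms(3,4) by simp
  have rm: "p2 - p1 = (-1 + sqrt (1 + (2*b*mu*(A-B))^2)) / (- mu * (A-B))" if "A \<noteq> B"
    using root_minus[OF assms(1,2) _ _ dif] assms(6) that by simp
  have "A = B \<longrightarrow> p1 = p2" using dif by auto
  then show ?thesis using rp rm by blast
qed


lemma plus_root_ok:
  fixes mu b S :: real
  assumes "mu > 0" "b > 0" "S < 0"
  defines "P \<equiv> (1 + sqrt (1 + (2*b*mu*S)^2)) / (- mu * S)"
  shows "P > 2*b \<and> mu*S*(P^2 - 4*b^2) = -2*P"
proof -
  define q where "q = sqrt (1 + (2*b*mu*S)^2)"
  have q2: "q^2 = 1 + (2*b*mu*S)^2" unfolding q_def by (simp add: add_pos_nonneg)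
  have q1: "q \<ge> 1" unfolding q_def by simp
  have mS: "mu*S < 0" using assms by (simp add: mult_pos_neg)
  have mSP: "mu*S*P = -(1+q)" unfolding P_def q_def[symmetric] using assms(1,3) by (simp add: field_simps)
  have "mu*S*P < 0" using mSP q1 by simp
  then have P0: "P > 0" using mult_less_0_iff[of "mu*S" P] mS by auto
  have "(mu*S)*(mu*S*(P^2 - 4*b^2)) = (mu*S*P)^2 - (2*b*mu*S)^2" by (simp add: power2_eq_square algebra_simps)
  also have "\<dots> = -2*(mu*S*P)" unfolding mSP using q2 by (simp add: power2_eq_square algebra_simps)
  also have "\<dots> = (mu*S)*(-2*P)" by simp
  finally have eq0: "(mu*S)*(mu*S*(P^2 - 4*b^2)) = (mu*S)*(-2*P)" .
  have ne: "mu*S \<noteq> 0" using mS by (metis order_less_irrefl)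
  have eq: "mu*S*(P^2 - 4*b^2) = -2*P" using mult_left_cancel[OF ne] eq0 by blast
  have "P^2 - 4*b^2 > 0"
  proof (rule ccontr)
    assume "\<not> P^2 - 4*b^2 > 0"
    then have "mu*S*(P^2 - 4*b^2) \<ge> 0" using mS by (simp add: mult_nonpos_nonpos)
    then show False using eq P0 by simp
  qed
  then have "P > 2*b"
  proof -
    assume g: "P^2 - 4*b^2 > 0"
    show ?thesis
    proof (rule ccontr)
      assume "\<not> P > 2*b"
      then have "P^2 \<le> (2*b)^2" using P0 by (intro power_mono) auto
      then show False using g by (simp add: power_mult_distrib)
    qed
  qed
  then show ?thesis using eq by simp
qed

lemma minus_root_ok:
  fixes mu b D :: real
  assumes "mu > 0" "b > 0" "D \<noteq> 0"
  defines "M \<equiv> (-1 + sqrt (1 + (2*b*mu*D)^2)) / (- mu * D)"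
  shows "\<bar>M\<bar> < 2*b \<and> mu*D*(4*b^2 - M^2) = -2*M"
proof -
  define q where "q = sqrt (1 + (2*b*mu*D)^2)"
  have q2: "q^2 = 1 + (2*b*mu*D)^2" unfolding q_def by (simp add: add_pos_nonneg)
  have "(2*b*mu*D)^2 > 0" using assms by simp
  then have q1: "q > 1" unfolding q_def by simp
  have mD: "mu*D \<noteq> 0" using assms by simp
  have mDM: "mu*D*M = 1 - q" unfolding M_def q_def[symmetric] using assms(1,3) by (simp add: field_simps)
  have "(mu*D)*(mu*D*(4*b^2 - M^2)) = (2*b*mu*D)^2 - (mu*D*M)^2" by (simp add: power2_eq_square algebra_simps)
  also have "\<dots> = -2*(mu*D*M)" unfolding mDM using q2 by (simp add: power2_eq_square algebra_simps)
  also have "\<dots> = (mu*D)*(-2*M)" by simp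
  finally have eq: "mu*D*(4*b^2 - M^2) = -2*M" using mult_left_cancel[OF mD] by blast
  have "(mu*D)^2*(4*b^2 - M^2) = (mu*D)*(mu*D*(4*b^2 - M^2))" by (simp add: power2_eq_square)
  also have "\<dots> = -2*(mu*D*M)" unfolding eq by simp
  also have "\<dots> > 0" unfolding mDM using q1 by simp
  finally have "4*b^2 - M^2 > 0" using mD by (simp add: zero_less_mult_iff)
  then have "\<bar>M\<bar> < 2*b"
  proof -
    assume g: "4*b^2 - M^2 > 0"
    show ?thesis
    proof (rule ccontr)
      assume "\<not> \<bar>M\<bar> < 2*b"
      then have "(2*b)^2 \<le> \<bar>M\<bar>^2" using assms(2) by (intro power_mono) auto
      then show False using g by (simp add: power_mult_distrib)
    qed
  qed
  then show ?thesis using eq by simp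
qed


lemma alg_bwd:
  fixes mu b A B :: real
  assumes "mu > 0" "b > 0" "A + B < 0"
  shows "\<exists>p1 p2. p1 > 0 \<and> p2 > 0 \<and> 2*b < p1 + p2 \<and> \<bar>p1 - p2\<bar> < 2*b \<and>
     mu*(B*((p1^2 + p2^2 - 4*b^2)/2)/p2 + A*p1) = -1 \<and>
     mu*(B*p2 + A*((p1^2 + p2^2 - 4*b^2)/2)/p1) = -1"
proof -
  define P where "P = (1 + sqrt (1 + (2*b*mu*(A+B))^2)) / (- mu * (A+B))"
  define M where "M = (if A = B then 0 else (-1 + sqrt (1 + (2*b*mu*(A-B))^2)) / (- mu * (A-B)))"
  have hP: "P > 2*b \<and> mu*(A+B)*(P^2 - 4*b^2) = -2*P"
    unfolding P_def by (rule plus_root_ok[OF assms])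
  have hM: "\<bar>M\<bar> < 2*b \<and> mu*(A-B)*(4*b^2 - M^2) = -2*M"
  proof (cases "A = B")
    case True then show ?thesis unfolding M_def using assms by simp
  next
    case False then show ?thesis unfolding M_def using minus_root_ok[OF assms(1,2), of "A-B"] by simp
  qed
  define p1 where "p1 = (P - M)/2"
  define p2 where "p2 = (P + M)/2"
  have P: "P = p1 + p2" and M: "M = p2 - p1" unfolding p1_def p2_def by (simp_all add: field_simps)
  have pos: "p1 > 0" "p2 > 0" using hP hM unfolding p1_def p2_def by auto
  define c where "c = (p1^2 + p2^2 - 4*b^2)/2"
  have s1: "mu*(B*c + A*p1*p2) + mu*(B*p1*p2 + A*c) = -(p1+p2)"
    using id_sum(1)[OF c_def, of mu B A] hP unfolding P by simp
  have s2: "mu*(B*c + A*p1*p2) - mu*(B*p1*p2 + A*c) = -(p2-p1)"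
    using id_sum(2)[OF c_def, of mu B A] hM unfolding M by simp
  have lin: "X = -p2 \<and> Y = -p1" if "X + Y = -(p1+p2)" "X - Y = -(p2-p1)" for X Y :: real
    using that by linarith
  have E1': "mu*(B*c + A*p1*p2) = -p2" using lin[OF s1 s2] by blast
  have E2': "mu*(B*p1*p2 + A*c) = -p1" using lin[OF s1 s2] by blast
  have "mu*(B*c/p2 + A*p1) = mu*(B*c + A*p1*p2)/p2" using pos by (simp add: field_simps)
  then have E1: "mu*(B*c/p2 + A*p1) = -1" using E1' pos by simp
  have "mu*(B*p2 + A*c/p1) = mu*(B*p1*p2 + A*c)/p1" using pos by (simp add: field_simps)
  then have E2: "mu*(B*p2 + A*c/p1) = -1" using E2' pos by simp
  show ?thesis
    apply (rule exI[of _ p1], rule exI[of _ p2])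
    using pos E1 E2 hP hM unfolding c_def P M by auto
qed

lemma w12:
  fixes r :: "real^3"
  assumes "b > 0"
  shows "(r - beacon1 b) \<bullet> (r - beacon2 b) = ((norm (r - beacon1 b))^2 + (norm (r - beacon2 b))^2 - 4*b^2)/2"
    and "2*b \<le> norm (r - beacon1 b) + norm (r - beacon2 b)"
    and "\<bar>norm (r - beacon1 b) - norm (r - beacon2 b)\<bar> \<le> 2*b"
proof -
  have d: "(r - beacon1 b) - (r - beacon2 b) = beacon2 b - beacon1 b" by simp
  have n: "norm ((r - beacon1 b) - (r - beacon2 b)) = 2*b" unfolding d using bdist[OF assms] .
  have "(norm ((r - beacon1 b) - (r - beacon2 b)))^2 =
     (norm (r - beacon1 b))^2 + (norm (r - beacon2 b))^2 - 2*((r - beacon1 b) \<bullet> (r - beacon2 b))"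
    unfolding power2_norm_eq_inner by (simp add: inner_diff_left inner_diff_right inner_commute)
  then show "(r - beacon1 b) \<bullet> (r - beacon2 b) = ((norm (r - beacon1 b))^2 + (norm (r - beacon2 b))^2 - 4*b^2)/2"
    unfolding n by (simp add: power2_eq_square field_simps)
  show "2*b \<le> norm (r - beacon1 b) + norm (r - beacon2 b)"
    using norm_triangle_ineq4[of "r - beacon1 b" "r - beacon2 b"] n by simp
  show "\<bar>norm (r - beacon1 b) - norm (r - beacon2 b)\<bar> \<le> 2*b"
    using norm_triangle_ineq3[of "r - beacon1 b" "r - beacon2 b"] n by simp
qed

lemma eq_char:
  fixes r x :: "real^3"
  assumes "norm x = 1"
  shows "circling_equilibrium mu lam ab1 ab2 b r x \<longleftrightarrow>
    (r \<noteq> beacon1 b \<and> r \<noteq> beacon2 b \<and> \<not> collinear {r, beacon1 b, beacon2 b} \<and>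
     x \<bullet> (r - beacon1 b) = 0 \<and> x \<bullet> (r - beacon2 b) = 0 \<and>
     mu * ((1 - lam) * ab2 * ((r - beacon1 b) \<bullet> (r - beacon2 b)) / norm (r - beacon2 b) + lam * ab1 * norm (r - beacon1 b)) = -1 \<and>
     mu * ((1 - lam) * ab2 * norm (r - beacon2 b) + lam * ab1 * ((r - beacon1 b) \<bullet> (r - beacon2 b)) / norm (r - beacon1 b)) = -1)"
proof (cases "r \<noteq> beacon1 b \<and> r \<noteq> beacon2 b")
  case True
  have r1: "rho1b1 b (r,x) > 0" and r2: "rho1b2 b (r,x) > 0" using True by (simp_all add: rho1b1_def rho1b2_def)
  let ?F = "flow_deriv mu lam ab1 ab2 b (xbar1b1 b) r x 0 \<and> flow_deriv mu lam ab1 ab2 b (xbar1b2 b) r x 0 \<and>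
          flow_deriv mu lam ab1 ab2 b (rho1b1 b) r x 0 \<and> flow_deriv mu lam ab1 ab2 b (rho1b2 b) r x 0"
  let ?C = "\<not> collinear {r, beacon1 b, beacon2 b}"
  have "circling_equilibrium mu lam ab1 ab2 b r x \<longleftrightarrow> ?C \<and> ?F"
    unfolding circling_equilibrium_def using r1 r2 by simp
  also have "\<dots> \<longleftrightarrow> ?C \<and> (x \<bullet> (r - beacon1 b) = 0 \<and> x \<bullet> (r - beacon2 b) = 0 \<and>
     mu * ((1 - lam) * ab2 * ((r - beacon1 b) \<bullet> (r - beacon2 b)) / norm (r - beacon2 b) + lam * ab1 * norm (r - beacon1 b)) = -1 \<and>
     mu * ((1 - lam) * ab2 * norm (r - beacon2 b) + lam * ab1 * ((r - beacon1 b) \<bullet> (r - beacon2 b)) / norm (r - beacon1 b)) = -1)"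
    using char[OF assms, of r b mu lam ab1 ab2] True by simp
  finally show ?thesis using True by simp
next
  case False
  then have "rho1b1 b (r,x) = 0 \<or> rho1b2 b (r,x) = 0" by (auto simp: rho1b1_def rho1b2_def)
  then have "\<not> circling_equilibrium mu lam ab1 ab2 b r x" unfolding circling_equilibrium_def by auto
  moreover have "\<not> (r \<noteq> beacon1 b \<and> r \<noteq> beacon2 b)" using False .
  ultimately show ?thesis by (simp only: de_Morgan_conj not_not) blast
qed

lemma fwd:
  fixes r x :: "real^3"
  assumes "norm x = 1" "circling_equilibrium mu lam ab1 ab2 b r x" "mu > 0" "b > 0"
  defines "A \<equiv> lam * ab1" and "B \<equiv> (1 - lam) * ab2"
  shows "xbar1b1 b (r, x) = 0 \<and> xbar1b2 b (r, x) = 0 \<and>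
    A + B < 0 \<and> rho1b1 b (r, x) + rho1b2 b (r, x) = (1 + sqrt (1 + (2*b*mu*(A+B))^2)) / (- mu * (A+B)) \<and>
    (A = B \<longrightarrow> rho1b1 b (r, x) = rho1b2 b (r, x)) \<and>
    (A \<noteq> B \<longrightarrow> rho1b2 b (r, x) - rho1b1 b (r, x) = (-1 + sqrt (1 + (2*b*mu*(A-B))^2)) / (- mu * (A-B)))"
proof -
  note h = assms(2)[unfolded eq_char[OF assms(1)]]
  have p1: "norm (r - beacon1 b) > 0" and p2: "norm (r - beacon2 b) > 0" using h by auto
  have E1: "mu * (B * ((r - beacon1 b) \<bullet> (r - beacon2 b)) / norm (r - beacon2 b) + A * norm (r - beacon1 b)) = -1"
    using h unfolding A_def B_def by (simp add: mult.assoc)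
  have E2: "mu * (B * norm (r - beacon2 b) + A * ((r - beacon1 b) \<bullet> (r - beacon2 b)) / norm (r - beacon1 b)) = -1"
    using h unfolding A_def B_def by (simp add: mult.assoc)
  have a: "A + B < 0 \<and> norm (r - beacon1 b) + norm (r - beacon2 b) = (1 + sqrt (1 + (2*b*mu*(A+B))^2)) / (- mu * (A+B)) \<and>
    (A = B \<longrightarrow> norm (r - beacon1 b) = norm (r - beacon2 b)) \<and>
    (A \<noteq> B \<longrightarrow> norm (r - beacon2 b) - norm (r - beacon1 b) = (-1 + sqrt (1 + (2*b*mu*(A-B))^2)) / (- mu * (A-B)))"
    by (rule alg_fwd[OF assms(3,4) p1 p2 w12(2)[OF assms(4)] w12(3)[OF assms(4)] w12(1)[OF assms(4)] E1 E2])
  have x: "xbar1b1 b (r, x) = 0 \<and> xbar1b2 b (r, x) = 0"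
    using h by (simp add: xbar1b1_def xbar1b2_def)
  show ?thesis using a x by (simp add: rho1b1_def rho1b2_def)
qed

theorem proposition3p1:
  fixes mu lam ab1 ab2 b :: real
  assumes "mu > 0" and "0 < lam" and "lam < 1"
    and "ab1 \<in> {-1..1}" and "ab2 \<in> {-1..1}" and "b > 0"
  defines "sp \<equiv> lam * ab1 + (1 - lam) * ab2"
    and "sm \<equiv> lam * ab1 - (1 - lam) * ab2"
  defines "rp \<equiv> (1 + sqrt (1 + (2 * b * mu * sp)\<^sup>2)) / (- mu * sp)"
    and "rm \<equiv> (-1 + sqrt (1 + (2 * b * mu * sm)\<^sup>2)) / (- mu * sm)"
  shows "((\<exists>r x. norm x = 1 \<and> circling_equilibrium mu lam ab1 ab2 b r x) \<longleftrightarrow>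
            ((lam * ab1 = (1 - lam) * ab2 \<and> lam * ab1 < 0) \<or>
             (lam * ab1 \<noteq> (1 - lam) * ab2 \<and> sp < 0)))
         \<and> (\<forall>r x. norm x = 1 \<and> circling_equilibrium mu lam ab1 ab2 b r x \<longrightarrow>
              xbar1b1 b (r, x) = 0 \<and> xbar1b2 b (r, x) = 0 \<and>
              (lam * ab1 = (1 - lam) * ab2 \<and> lam * ab1 < 0 \<longrightarrow>
                 rho1b1 b (r, x) = (1 + sqrt (1 + (4 * mu * lam * ab1 * b)\<^sup>2)) / (- 4 * mu * lam * ab1) \<and>
                 rho1b2 b (r, x) = (1 + sqrt (1 + (4 * mu * lam * ab1 * b)\<^sup>2)) / (- 4 * mu * lam * ab1)) \<and>
              (lam * ab1 \<noteq> (1 - lam) * ab2 \<and> sp < 0 \<longrightarrow>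
                 rho1b1 b (r, x) = (rp - rm) / 2 \<and> rho1b2 b (r, x) = (rp + rm) / 2))"
  proof -
  let ?A = "lam * ab1" and ?B = "(1 - lam) * ab2"
  have sp: "sp = ?A + ?B" and sm: "sm = ?A - ?B" unfolding sp_def sm_def by simp_all
  have part1: "(\<exists>r x. norm x = 1 \<and> circling_equilibrium mu lam ab1 ab2 b r x) \<longleftrightarrow>
            ((lam * ab1 = (1 - lam) * ab2 \<and> lam * ab1 < 0) \<or>
             (lam * ab1 \<noteq> (1 - lam) * ab2 \<and> sp < 0))"
  proof
    assume "\<exists>r x. norm x = 1 \<and> circling_equilibrium mu lam ab1 ab2 b r x"
    then obtain r x where "norm x = 1" "circling_equilibrium mu lam ab1 ab2 b r x" by blast
    then have S: "?A + ?B < 0" using fwd[of x mu lam ab1 ab2 b r] assms(1,6) by blast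
    show "(lam * ab1 = (1 - lam) * ab2 \<and> lam * ab1 < 0) \<or> (lam * ab1 \<noteq> (1 - lam) * ab2 \<and> sp < 0)"
    proof (cases "lam * ab1 = (1 - lam) * ab2")
      case True then show ?thesis using S by linarith
    next
      case False then show ?thesis using S sp by linarith
    qed
  next
    assume "(lam * ab1 = (1 - lam) * ab2 \<and> lam * ab1 < 0) \<or> (lam * ab1 \<noteq> (1 - lam) * ab2 \<and> sp < 0)"
    then have S: "?A + ?B < 0" using sp by linarith
    obtain p1 p2 where pp: "p1 > 0" "p2 > 0" "2*b < p1 + p2" "\<bar>p1 - p2\<bar> < 2*b"
      "mu*(?B*((p1^2 + p2^2 - 4*b^2)/2)/p2 + ?A*p1) = -1"
      "mu*(?B*p2 + ?A*((p1^2 + p2^2 - 4*b^2)/2)/p1) = -1"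
      using alg_bwd[OF assms(1,6) S] by blast
    obtain r x where rx: "norm x = 1" "norm (r - beacon1 b) = p1" "norm (r - beacon2 b) = p2"
      "x \<bullet> (r - beacon1 b) = 0" "x \<bullet> (r - beacon2 b) = 0" "\<not> collinear {r, beacon1 b, beacon2 b}"
      using construct[OF assms(6) pp(1-4)] by blast
    have c: "(r - beacon1 b) \<bullet> (r - beacon2 b) = (p1^2 + p2^2 - 4*b^2)/2"
      using w12(1)[OF assms(6), of r] rx by simp
    have "circling_equilibrium mu lam ab1 ab2 b r x"
      unfolding eq_char[OF rx(1)] c rx(2,3)
      using rx pp by (auto simp: mult.assoc)
    then show "\<exists>r x. norm x = 1 \<and> circling_equilibrium mu lam ab1 ab2 b r x" using rx(1) by blast
  qed
  have part2: "xbar1b1 b (r, x) = 0 \<and> xbar1b2 b (r, x) = 0 \<and>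
              (lam * ab1 = (1 - lam) * ab2 \<and> lam * ab1 < 0 \<longrightarrow>
                 rho1b1 b (r, x) = (1 + sqrt (1 + (4 * mu * lam * ab1 * b)\<^sup>2)) / (- 4 * mu * lam * ab1) \<and>
                 rho1b2 b (r, x) = (1 + sqrt (1 + (4 * mu * lam * ab1 * b)\<^sup>2)) / (- 4 * mu * lam * ab1)) \<and>
              (lam * ab1 \<noteq> (1 - lam) * ab2 \<and> sp < 0 \<longrightarrow>
                 rho1b1 b (r, x) = (rp - rm) / 2 \<and> rho1b2 b (r, x) = (rp + rm) / 2)"
    if "norm x = 1" "circling_equilibrium mu lam ab1 ab2 b r x" for r x
  proof -
    note f = fwd[OF that assms(1,6)]
    have ca: "rho1b1 b (r, x) = (1 + sqrt (1 + (4 * mu * lam * ab1 * b)\<^sup>2)) / (- 4 * mu * lam * ab1) \<and>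
                 rho1b2 b (r, x) = (1 + sqrt (1 + (4 * mu * lam * ab1 * b)\<^sup>2)) / (- 4 * mu * lam * ab1)"
      if ab: "lam * ab1 = (1 - lam) * ab2"
    proof -
      have s2: "?A + ?B = 2*(lam*ab1)" using ab by linarith
      have e1: "2*b*mu*(?A + ?B) = 4 * mu * lam * ab1 * b" unfolding s2 by (simp add: algebra_simps)
      have e2: "- mu * (?A + ?B) = 2 * (- mu * lam * ab1)" unfolding s2 by (simp add: algebra_simps)
      have eq: "rho1b1 b (r, x) = rho1b2 b (r, x)" using f ab by blast
      have "rho1b1 b (r, x) + rho1b2 b (r, x) = (1 + sqrt (1 + (4 * mu * lam * ab1 * b)\<^sup>2)) / (2 * (- mu * lam * ab1))"
        using f unfolding e1 e2 by blast
      then show ?thesis using eq by (simp add: field_simps)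
    qed
    have cb: "rho1b1 b (r, x) = (rp - rm) / 2 \<and> rho1b2 b (r, x) = (rp + rm) / 2"
      if ab: "lam * ab1 \<noteq> (1 - lam) * ab2"
    proof -
      have "rho1b1 b (r, x) + rho1b2 b (r, x) = rp" using f unfolding rp_def sp by blast
      moreover have "rho1b2 b (r, x) - rho1b1 b (r, x) = rm" using f ab unfolding rm_def sm by blast
      ultimately have "2 * rho1b1 b (r, x) = rp - rm" "2 * rho1b2 b (r, x) = rp + rm" by linarith+
      then show ?thesis by simp
    qed
    show ?thesis using f ca cb by blast
  qed
  show ?thesis using part1 part2 by blast
qed

end
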